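(* Let $m=m(n)$ and $p=p(n)\in(0,1)$, let $N_E$ be the number of edges of $\mathcal G(n,m,p)$ and $\hat p=1-(1-p^2)^m$. If $\widetilde N_E=(N_E-\mathbb E[N_E])/\sqrt{\operatorname{Var}[N_E]}$ converges in distribution to a standard normal random variable as $n\to\infty$, then $n^2\hat p(1-\hat p)\to\infty$.
   Context: Random intersection graph $\mathcal G(n,m,p)$: vertices $v_1,\ldots,v_n$, attributes $a_1,\ldots,a_m$; each vertex chooses each attribute independently with probability $p$; two vertices are adjacent iff they chose at least one common attribute. *)

theory Defs
  imports "HOL-Probability.Probability"
begin

text \<open>Random intersection graph G(n,m,p): vertices 0..n-1, attributes 0..m-1.
  An outcome is a function w :: nat \<times> nat \<Rightarrow> bool, w (i,a) meaning vertex i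
  chose attribute a; all choices in {..<n} \<times> {..<m} are independent Bernoulli(p).\<close>

definition RIG :: "nat \<Rightarrow> nat \<Rightarrow> real \<Rightarrow> (nat \<times> nat \<Rightarrow> bool) pmf" where
  "RIG n m p = Pi_pmf ({..<n} \<times> {..<m}) False (\<lambda>_. bernoulli_pmf p)"

definition rig_adj :: "nat \<Rightarrow> (nat \<times> nat \<Rightarrow> bool) \<Rightarrow> nat \<Rightarrow> nat \<Rightarrow> bool" where
  "rig_adj m w u v \<longleftrightarrow> u \<noteq> v \<and> (\<exists>a<m. w (u,a) \<and> w (v,a))"

definition num_edges :: "nat \<Rightarrow> nat \<Rightarrow> (nat \<times> nat \<Rightarrow> bool) \<Rightarrow> nat" where
  "num_edges n m w = card {(u,v). u < v \<and> v < n \<and> rig_adj m w u v}"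

end

theory Submission imports Defs begin

lemma normal_singleton: "measure std_normal_distribution {x} = 0"
proof -
  have "emeasure std_normal_distribution {x} = (\<integral>\<^sup>+y. ennreal (std_normal_density y) * indicator {x} y \<partial>lborel)"
    by (simp add: emeasure_density)
  also have "\<dots> = (\<integral>\<^sup>+y. 0 \<partial>(lborel::real measure))"
    apply (rule nn_integral_cong_AE)
    using AE_lborel_singleton[of x] by (auto elim!: eventually_mono)
  finally show ?thesis by (simp add: measure_def)
qed

lemma normal_pos:
  assumes "a < b"
  shows "measure std_normal_distribution {a<..b} > 0"
proof -
  define c where "c = std_normal_density (\<bar>a\<bar> + \<bar>b\<bar>)"
  have c: "c > 0" unfolding c_def by (simp add: normal_density_pos)
  have le: "ennreal c * indicator {a<..b} x \<le> ennreal (std_normal_density x) * indicator {a<..b} x" for x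
  proof (cases "x \<in> {a<..b}")
    case True
    then have "\<bar>x\<bar> \<le> \<bar>a\<bar> + \<bar>b\<bar>" by auto
    then have "x\<^sup>2 \<le> (\<bar>a\<bar> + \<bar>b\<bar>)\<^sup>2"
      by (metis abs_ge_zero power2_abs power_mono)
    then have "c \<le> std_normal_density x" unfolding c_def std_normal_density_def
      by (intro mult_left_mono) auto
    then show ?thesis using True by (simp add: ennreal_leI)
  qed simp
  have "emeasure std_normal_distribution {a<..b} = (\<integral>\<^sup>+x. ennreal (std_normal_density x) * indicator {a<..b} x \<partial>lborel)"
    by (simp add: emeasure_density)
  also have "\<dots> \<ge> (\<integral>\<^sup>+x. ennreal c * indicator {a<..b} x \<partial>lborel)"
    by (intro nn_integral_mono le)
  also have "(\<integral>\<^sup>+x. ennreal c * indicator {a<..b} x \<partial>(lborel::real measure)) = ennreal (c * (b - a))"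
    using assms c by (simp add: nn_integral_cmult_indicator ennreal_mult)
  finally have "ennreal (c * (b - a)) \<le> emeasure std_normal_distribution {a<..b}" .
  moreover have "c * (b - a) > 0" using c assms by simp
  moreover have "emeasure std_normal_distribution {a<..b} = ennreal (measure std_normal_distribution {a<..b})"
    using real_distribution.finite_borel_measure_M[OF real_dist_normal_dist]
    by (simp add: finite_borel_measure_def finite_measure.emeasure_eq_measure)
  ultimately show ?thesis
    by (metis ennreal_le_iff measure_nonneg order_less_le_trans)
qed


lemma prob_restrict_event:
  assumes "finite I" "J \<subseteq> I" "\<And>f. f \<in> E \<longleftrightarrow> (\<lambda>x. if x \<in> J then f x else d) \<in> E"
  shows "measure_pmf.prob (Pi_pmf I d q) E = measure_pmf.prob (Pi_pmf J d q) E"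
proof -
  have "(\<lambda>f x. if x \<in> J then f x else d) -` E = E" using assms(3) by auto
  then show ?thesis using Pi_pmf_subset[OF assms(1,2), of d q] by simp
qed

lemma prob_pair_product:
  "measure_pmf.prob (pair_pmf M N) (A \<times> B) = measure_pmf.prob M A * measure_pmf.prob N B"
proof -
  have "measure_pmf.prob (pair_pmf M N) (A \<times> B) = measure_pmf.prob (pair_pmf M N) ((A \<times> B) \<inter> set_pmf (pair_pmf M N))"
    by (rule measure_Int_set_pmf[symmetric])
  also have "(A \<times> B) \<inter> set_pmf (pair_pmf M N) = (A \<inter> set_pmf M) \<times> (B \<inter> set_pmf N)" by auto
  also have "measure_pmf.prob (pair_pmf M N) \<dots> = measure_pmf.prob M (A \<inter> set_pmf M) * measure_pmf.prob N (B \<inter> set_pmf N)"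
    by (intro measure_pmf_prob_product) (auto intro: countable_subset)
  finally show ?thesis by (simp add: measure_Int_set_pmf)
qed

lemma nonadj_prob:
  fixes u v :: nat and A :: "nat set"
  assumes "u \<noteq> v" "finite A" "0 \<le> p" "p \<le> 1"
  shows "measure_pmf.prob (Pi_pmf ({u,v} \<times> A) False (\<lambda>_. bernoulli_pmf p))
           {w. \<forall>a\<in>A. \<not> (w (u,a) \<and> w (v,a))} = (1 - p\<^sup>2) ^ card A"
  using assms(2)
proof (induction A rule: finite_induct)
  case empty
  then show ?case by simp
next
  case (insert a A)
  define S where "S = {u,v} \<times> A"
  define G where "G = {(u,a),(v,a)}"
  define q where "q = (\<lambda>_::nat\<times>nat. bernoulli_pmf p)"
  define h where "h = (\<lambda>(f::nat\<times>nat\<Rightarrow>bool,g::nat\<times>nat\<Rightarrow>bool) x. if x \<in> S then f x else g x)"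
  define EA where "EA = {w::nat\<times>nat\<Rightarrow>bool. \<forall>a\<in>A. \<not> (w (u,a) \<and> w (v,a))}"
  define G' where "G' = {g::nat\<times>nat\<Rightarrow>bool. \<not> (g (u,a) \<and> g (v,a))}"
  have fS: "finite S" "finite G" using insert by (auto simp: S_def G_def)
  have un: "{u,v} \<times> insert a A = S \<union> G" by (auto simp: S_def G_def)
  have dj: "S \<inter> G = {}" using insert by (auto simp: S_def G_def)
  have "Pi_pmf (S \<union> G) False q = map_pmf h (pair_pmf (Pi_pmf S False q) (Pi_pmf G False q))"
    unfolding h_def by (rule Pi_pmf_union[OF fS dj])
  moreover have "h -` {w. \<forall>a\<in>insert a A. \<not> (w (u,a) \<and> w (v,a))} = EA \<times> G'"
    using insert(2) by (auto simp: h_def EA_def G'_def S_def)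
  ultimately have "measure_pmf.prob (Pi_pmf (S \<union> G) False q) {w. \<forall>a\<in>insert a A. \<not> (w (u,a) \<and> w (v,a))}
      = measure_pmf.prob (Pi_pmf S False q) EA * measure_pmf.prob (Pi_pmf G False q) G'"
    by (simp add: prob_pair_product)
  moreover have "measure_pmf.prob (Pi_pmf S False q) EA = (1 - p\<^sup>2) ^ card A"
    using insert(3) by (simp add: S_def EA_def q_def)
  moreover have "measure_pmf.prob (Pi_pmf G False q) G' = 1 - p\<^sup>2"
  proof -
    have "G' = space (measure_pmf (Pi_pmf G False q)) - Pi G (\<lambda>_. {True})" by (auto simp: G'_def G_def Pi_def)
    then have "measure_pmf.prob (Pi_pmf G False q) G' = 1 - measure_pmf.prob (Pi_pmf G False q) (Pi G (\<lambda>_. {True}))"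
      by (simp only: measure_pmf.prob_compl measure_pmf.prob_space sets_measure_pmf UNIV_I)
    also have "measure_pmf.prob (Pi_pmf G False q) (Pi G (\<lambda>_. {True})) = (\<Prod>x\<in>G. measure_pmf.prob (q x) {True})"
      by (rule measure_Pi_pmf_Pi[OF fS(2)])
    also have "\<dots> = p\<^sup>2" using assms by (simp add: G_def q_def measure_pmf_single power2_eq_square)
    finally show ?thesis .
  qed
  ultimately show ?case using un insert by (simp add: q_def)
qed
lemma adj_prob:
  assumes "u < n" "v < n" "u \<noteq> v" "0 \<le> p" "p \<le> 1"
  shows "measure_pmf.prob (RIG n m p) {w. rig_adj m w u v} = 1 - (1 - p\<^sup>2) ^ m"
proof -
  define E where "E = {w::nat\<times>nat\<Rightarrow>bool. \<forall>a\<in>{..<m}. \<not> (w (u,a) \<and> w (v,a))}"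
  have "measure_pmf.prob (RIG n m p) E = measure_pmf.prob (Pi_pmf ({u,v} \<times> {..<m}) False (\<lambda>_. bernoulli_pmf p)) E"
    unfolding RIG_def
    by (rule prob_restrict_event) (use assms in \<open>auto simp: E_def\<close>)
  also have "\<dots> = (1 - p\<^sup>2) ^ m" unfolding E_def
    using nonadj_prob[OF assms(3) _ assms(4,5), of "{..<m}"] by simp
  finally have 1: "measure_pmf.prob (RIG n m p) E = (1 - p\<^sup>2) ^ m" .
  have "{w. rig_adj m w u v} = space (measure_pmf (RIG n m p)) - E"
    using assms(3) by (auto simp: E_def rig_adj_def)
  then show ?thesis using 1
    by (simp only: measure_pmf.prob_compl measure_pmf.prob_space sets_measure_pmf UNIV_I)
qed

lemma num_edges_sum:
  "real (num_edges n m w) = (\<Sum>x\<in>{(u,v). u < v \<and> v < n}. of_bool (rig_adj m w (fst x) (snd x)))"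
proof -
  have fin: "finite {(u,v). u < v \<and> v < (n::nat)}"
    by (rule finite_subset[of _ "{..<n} \<times> {..<n}"]) auto
  have "{(u,v). u < v \<and> v < n \<and> rig_adj m w u v} = {x\<in>{(u,v). u < v \<and> v < n}. rig_adj m w (fst x) (snd x)}"
    by auto
  then show ?thesis unfolding num_edges_def using fin
    by (simp add: sum.If_cases Int_def)
qed
lemma exp_edges:
  assumes "0 \<le> p" "p \<le> 1"
  shows "measure_pmf.expectation (RIG n m p) (\<lambda>w. real (num_edges n m w))
     = real (card {(u,v). u < v \<and> v < n}) * (1 - (1 - p\<^sup>2) ^ m)"
proof -
  let ?P = "{(u,v). u < v \<and> v < (n::nat)}"
  have fin: "finite ?P"
    by (rule finite_subset[of _ "{..<n} \<times> {..<n}"]) auto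
  have int: "integrable (measure_pmf (RIG n m p)) (\<lambda>w. of_bool (rig_adj m w (fst x) (snd x)) :: real)" for x
    by (rule measure_pmf.integrable_const_bound[where B=1]) auto
  have "measure_pmf.expectation (RIG n m p) (\<lambda>w. real (num_edges n m w))
     = measure_pmf.expectation (RIG n m p) (\<lambda>w. \<Sum>x\<in>?P. of_bool (rig_adj m w (fst x) (snd x)))"
    by (simp only: num_edges_sum)
  also have "\<dots> = (\<Sum>x\<in>?P. measure_pmf.expectation (RIG n m p) (\<lambda>w. of_bool (rig_adj m w (fst x) (snd x))))"
    by (rule Bochner_Integration.integral_sum) (rule int)
  also have "\<dots> = (\<Sum>x\<in>?P. 1 - (1 - p\<^sup>2) ^ m)"
  proof (rule sum.cong[OF refl])
    fix x assume x: "x \<in> ?P"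
    have "(\<lambda>w. of_bool (rig_adj m w (fst x) (snd x)) :: real) = indicator {w. rig_adj m w (fst x) (snd x)}"
      by (auto simp: indicator_def)
    then have "measure_pmf.expectation (RIG n m p) (\<lambda>w. of_bool (rig_adj m w (fst x) (snd x)))
        = measure_pmf.prob (RIG n m p) {w. rig_adj m w (fst x) (snd x)}"
      by (simp add: measure_pmf.emeasure_eq_measure)
    also have "\<dots> = 1 - (1 - p\<^sup>2) ^ m"
      using x assms by (intro adj_prob) auto
    finally show "measure_pmf.expectation (RIG n m p) (\<lambda>w. of_bool (rig_adj m w (fst x) (snd x))) = 1 - (1 - p\<^sup>2) ^ m" .
  qed
  finally show ?thesis by simp
qed

lemma num_edges_le: "num_edges n m w \<le> n ^ 2"
proof -
  have "num_edges n m w \<le> card ({..<n} \<times> {..<n})"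
    unfolding num_edges_def by (rule card_mono) auto
  then show ?thesis by (simp add: power2_eq_square)
qed

lemma card_pairs_le: "card {(u,v). u < v \<and> v < (n::nat)} \<le> n ^ 2"
proof -
  have "card {(u,v). u < v \<and> v < (n::nat)} \<le> card ({..<n} \<times> {..<n})"
    by (rule card_mono) auto
  then show ?thesis by (simp add: power2_eq_square)
qed

lemma num_edges_le_pairs: "num_edges n m w \<le> card {(u,v). u < v \<and> v < (n::nat)}"
proof -
  have fin: "finite {(u,v). u < v \<and> v < (n::nat)}"
    by (rule finite_subset[of _ "{..<n} \<times> {..<n}"]) auto
  show ?thesis unfolding num_edges_def by (rule card_mono[OF fin]) auto
qed
lemma cdf_pmf_distr:
  "cdf (distr (measure_pmf Q) borel (Y :: 'a \<Rightarrow> real)) x = measure_pmf.prob Q {w. Y w \<le> x}"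
  unfolding cdf_def2 by (subst measure_distr) (auto simp: vimage_def)

lemma lattice_sets:
  fixes X :: "'a \<Rightarrow> nat" and \<mu> \<sigma> \<delta> :: real
  assumes "\<delta> > 0" "0 \<le> \<sigma>" "\<sigma> \<le> 1/(2*\<delta>)"
  shows "{w. (real (X w) - \<mu>)/\<sigma> \<le> \<delta>} = {w. (real (X w) - \<mu>)/\<sigma> \<le> 0}
       \<or> {w. (real (X w) - \<mu>)/\<sigma> \<le> 2*\<delta>} = {w. (real (X w) - \<mu>)/\<sigma> \<le> \<delta>}"
proof (rule ccontr)
  define Y where "Y = (\<lambda>w. (real (X w) - \<mu>)/\<sigma>)"
  assume "\<not> ?thesis"
  then have "{w. Y w \<le> \<delta>} \<noteq> {w. Y w \<le> 0}" "{w. Y w \<le> 2*\<delta>} \<noteq> {w. Y w \<le> \<delta>}"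
    unfolding Y_def by auto
  then obtain w1 w2 where w1: "0 < Y w1" "Y w1 \<le> \<delta>" and w2: "\<delta> < Y w2" "Y w2 \<le> 2*\<delta>"
    using assms(1) by (auto simp: set_eq_iff) (smt (verit))+
  have "\<sigma> \<noteq> 0" using w1 by (auto simp: Y_def)
  with assms have sp: "\<sigma> > 0" by auto
  have d: "Y w2 - Y w1 = (real (X w2) - real (X w1)) / \<sigma>"
    unfolding Y_def by (simp add: diff_divide_distrib)
  have "Y w2 - Y w1 > 0" using w1 w2 by simp
  then have "real (X w2) - real (X w1) > 0" using d sp by (simp add: zero_less_divide_iff)
  then have "X w2 > X w1" by simp
  then have "real (X w2) - real (X w1) \<ge> 1" by linarith
  then have "Y w2 - Y w1 \<ge> 1 / \<sigma>" using d sp by (simp add: divide_right_mono)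
  moreover have "1 / \<sigma> \<ge> 2 * \<delta>" using assms sp
    by (simp add: field_simps)
  moreover have "Y w2 - Y w1 < 2 * \<delta>" using w1 w2 by simp
  ultimately show False by simp
qed
lemma sigma_bound:
  fixes X :: "'a \<Rightarrow> nat" and T :: nat and ph \<mu> \<sigma> :: real
  assumes XT: "\<And>w. X w \<le> T" and ph: "0 \<le> ph" "ph \<le> 1" and mu: "\<mu> = T * ph" and sg: "0 \<le> \<sigma>"
    and lo: "measure_pmf.prob Q {w. (real (X w) - \<mu>)/\<sigma> \<le> -1} > 0"
    and hi: "measure_pmf.prob Q {w. (real (X w) - \<mu>)/\<sigma> \<le> 1} < 1"
  shows "\<sigma> \<le> 2 * T * ph * (1 - ph)"
proof (cases "\<sigma> = 0")
  case True
  then show ?thesis using ph by simp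
next
  case False
  with sg have sp: "\<sigma> > 0" by simp
  from lo obtain w1 where w1: "(real (X w1) - \<mu>)/\<sigma> \<le> -1"
    by (metis (mono_tags, lifting) empty_Collect_eq less_irrefl measure_empty)
  have "{w. (real (X w) - \<mu>)/\<sigma> \<le> 1} \<noteq> UNIV"
  proof
    assume "{w. (real (X w) - \<mu>)/\<sigma> \<le> 1} = UNIV"
    then have "measure_pmf.prob Q {w. (real (X w) - \<mu>)/\<sigma> \<le> 1} = 1"
      using measure_pmf.prob_space[of Q] by simp
    with hi show False by simp
  qed
  then obtain w2 where w2: "(real (X w2) - \<mu>)/\<sigma> > 1" by (metis (mono_tags, lifting) UNIV_eq_I mem_Collect_eq not_le)
  have a: "\<sigma> \<le> \<mu>" using w1 sp by (simp add: field_simps)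
  have b: "\<sigma> \<le> T - \<mu>" using w2 sp XT[of w2] by (simp add: field_simps)
  have c: "min ph (1 - ph) \<le> 2 * ph * (1 - ph)"
  proof (cases "ph \<le> 1/2")
    case True
    have "0 \<le> ph * (1 - 2*ph)" using True ph by simp
    then show ?thesis using True by (simp add: min_def algebra_simps)
  next
    case False
    have "0 \<le> (1 - ph) * (2*ph - 1)" using False ph by simp
    then show ?thesis using False by (simp add: min_def algebra_simps)
  qed
  have "\<sigma> \<le> T * min ph (1 - ph)" using a b mu by (simp add: min_def algebra_simps)
  also have "\<dots> \<le> T * (2 * ph * (1 - ph))" by (rule mult_left_mono[OF c]) simp
  finally show ?thesis by (simp add: algebra_simps)
qed
theorem lemma7p6:
  fixes m :: "nat \<Rightarrow> nat" and p :: "nat \<Rightarrow> real"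
  assumes p_range: "\<And>n. 0 < p n \<and> p n < 1"
  assumes clt: "weak_conv_m
     (\<lambda>n. distr (measure_pmf (RIG n (m n) (p n))) borel
        (\<lambda>w. (real (num_edges n (m n) w)
               - measure_pmf.expectation (RIG n (m n) (p n)) (\<lambda>w. real (num_edges n (m n) w)))
             / sqrt (measure_pmf.variance (RIG n (m n) (p n)) (\<lambda>w. real (num_edges n (m n) w)))))
     std_normal_distribution"
  shows "filterlim (\<lambda>n. let ph = 1 - (1 - (p n)\<^sup>2) ^ (m n) in real n ^ 2 * ph * (1 - ph))
           at_top sequentially"
proof -
  define Q where "Q n = RIG n (m n) (p n)" for n
  define X where "X n w = num_edges n (m n) w" for n w
  define \<mu> where "\<mu> n = measure_pmf.expectation (Q n) (\<lambda>w. real (X n w))" for n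
  define \<sigma> where "\<sigma> n = sqrt (measure_pmf.variance (Q n) (\<lambda>w. real (X n w)))" for n
  define ph where "ph n = 1 - (1 - (p n)\<^sup>2) ^ (m n)" for n
  define T where "T n = card {(u,v). u < v \<and> v < (n::nat)}" for n
  define F where "F n x = measure_pmf.prob (Q n) {w. (real (X n w) - \<mu> n) / \<sigma> n \<le> x}" for n x
  define \<Phi> where "\<Phi> = cdf std_normal_distribution"
  interpret N: real_distribution std_normal_distribution by (rule real_dist_normal_dist)
  have conv: "(\<lambda>n. F n x) \<longlonglongrightarrow> \<Phi> x" for x
  proof -
    have "isCont (cdf std_normal_distribution) x"
      using N.isCont_cdf normal_singleton by simp
    then show ?thesis using clt
      unfolding weak_conv_m_def weak_conv_def F_def \<Phi>_def Q_def X_def \<mu>_def \<sigma>_def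
      by (simp add: cdf_pmf_distr)
  qed
  have p01: "0 \<le> p n" "p n \<le> 1" for n using p_range[of n] by auto
  have ph01: "0 \<le> ph n" "ph n \<le> 1" for n
  proof -
    have a: "0 \<le> 1 - (p n)\<^sup>2" "1 - (p n)\<^sup>2 \<le> 1" using p01[of n]
      by (auto simp: power_le_one)
    then have "0 \<le> (1 - (p n)\<^sup>2) ^ m n" "(1 - (p n)\<^sup>2) ^ m n \<le> 1"
      by (auto simp: power_le_one)
    then show "0 \<le> ph n" "ph n \<le> 1" by (auto simp: ph_def)
  qed
  have mu: "\<mu> n = T n * ph n" for n
    unfolding \<mu>_def Q_def X_def T_def ph_def by (rule exp_edges[OF p01])
  have sg: "0 \<le> \<sigma> n" for n
    unfolding \<sigma>_def by (intro real_sqrt_ge_zero Bochner_Integration.integral_nonneg) simp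
  have sbound: "\<sigma> n \<le> 2 * (real n ^ 2 * ph n * (1 - ph n))" if "F n (-1) > 0" "F n 1 < 1" for n
  proof -
    have "\<sigma> n \<le> 2 * T n * ph n * (1 - ph n)"
      apply (rule sigma_bound[where X="X n" and Q="Q n" and \<mu>="\<mu> n"])
      using that ph01[of n] mu[of n] sg[of n] num_edges_le_pairs
      by (auto simp: F_def X_def T_def)
    also have "\<dots> \<le> 2 * (real n ^ 2) * ph n * (1 - ph n)"
      using ph01[of n] card_pairs_le[of n] unfolding T_def
      by (intro mult_right_mono mult_left_mono) (auto simp flip: of_nat_power)
    finally show ?thesis by simp
  qed
  have Phi_pos: "\<Phi> b - \<Phi> a > 0" if "a < b" for a b
    unfolding \<Phi>_def using N.cdf_diff_eq[OF that] normal_pos[OF that] by simp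
  have Phi1: "\<Phi> (-1) > 0" using Phi_pos[of "-2" "-1"] N.cdf_nonneg[of "-2"] by (simp add: \<Phi>_def)
  have Phi2: "\<Phi> 1 < 1" using Phi_pos[of 1 2] N.cdf_bounded_prob[of 2] by (simp add: \<Phi>_def)
  show ?thesis
    unfolding filterlim_at_top Let_def ph_def[symmetric]
  proof
    fix Z :: real
    define \<delta> where "\<delta> = 1 / (4 * (\<bar>Z\<bar> + 1))"
    have dpos: "\<delta> > 0" unfolding \<delta>_def by (simp add: add_pos_nonneg)
    define \<epsilon> where "\<epsilon> = min (min (\<Phi> (-1)) (1 - \<Phi> 1)) (min (\<Phi> \<delta> - \<Phi> 0) (\<Phi> (2*\<delta>) - \<Phi> \<delta>))"
    have epos: "\<epsilon> > 0" unfolding \<epsilon>_def using Phi1 Phi2 Phi_pos[of 0 \<delta>] Phi_pos[of \<delta> "2*\<delta>"] dpos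
      by simp
    have e1: "\<epsilon> \<le> \<Phi> (-1)" and e2: "\<epsilon> \<le> 1 - \<Phi> 1" and e3: "\<epsilon> \<le> \<Phi> \<delta> - \<Phi> 0"
      and e4: "\<epsilon> \<le> \<Phi> (2*\<delta>) - \<Phi> \<delta>" unfolding \<epsilon>_def by auto
    have ev: "\<forall>\<^sub>F n in sequentially. dist (F n x) (\<Phi> x) < \<epsilon>/2" for x
      by (rule tendstoD[OF conv]) (use epos in simp)
    show "\<forall>\<^sub>F n in sequentially. Z \<le> real n ^ 2 * ph n * (1 - ph n)"
      using ev[of "-1"] ev[of 1] ev[of 0] ev[of \<delta>] ev[of "2*\<delta>"]
    proof eventually_elim
      case (elim n)
      show ?case
      proof (rule ccontr)
        assume "\<not> ?case"
        then have lt: "real n ^ 2 * ph n * (1 - ph n) < Z" by simp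
        have "F n (-1) > 0" using elim(1) using e1 e2 e3 e4 epos unfolding dist_real_def abs_less_iff by linarith
        moreover have "F n 1 < 1" using elim(2) using e1 e2 e3 e4 epos unfolding dist_real_def abs_less_iff by linarith
        ultimately have "\<sigma> n \<le> 2 * (real n ^ 2 * ph n * (1 - ph n))" by (rule sbound)
        also have "\<dots> \<le> 1 / (2 * \<delta>)" using lt unfolding \<delta>_def by simp
        finally have "\<sigma> n \<le> 1 / (2 * \<delta>)" .
        from lattice_sets[OF dpos sg this, of "X n" "\<mu> n"]
        have "F n \<delta> = F n 0 \<or> F n (2*\<delta>) = F n \<delta>" unfolding F_def by auto
        moreover have "F n \<delta> > F n 0" using elim(3,4) using e1 e2 e3 e4 epos unfolding dist_real_def abs_less_iff by linarith
        moreover have "F n (2*\<delta>) > F n \<delta>" using elim(4,5) using e1 e2 e3 e4 epos unfolding dist_real_def abs_less_iff by linarith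
        ultimately show False by auto
      qed
    qed
  qed
qed
end
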